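(* Let $G$ be a pro-$p$ group. Suppose that for every open subgroup $U$ of $G$ there exists a Frattini-cover $\phi: U\to K$ onto a pro-$p$ group $K$ such that $(K,M,\Phi(M))$ is a hierarchical triple for every maximal subgroup $M$ of $K$. Then $G$ is strongly Frattini-resistant.
   Context: $p$ is a prime; subgroups are closed; $\Phi(H)$ is the Frattini subgroup. A Frattini-cover is an epimorphism $\phi: G\to H$ of pro-$p$ groups with $\ker\phi\le\Phi(G)$. A triple $(G,K,H)$ with $H\le K\le G$ is hierarchical if $x\in G$, $x^p\in H$ imply $x\in K$. $G$ is strongly Frattini-resistant if $(G,H,\Phi(H))$ is hierarchical for every subgroup $H$ of $G$. *)

theory Defs
  imports "HOL-Algebra.Algebra" "HOL-Analysis.Analysis"
begin

definition topological_group :: "('a, 'm) monoid_scheme \<Rightarrow> 'a topology \<Rightarrow> bool" where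
  "topological_group G T \<longleftrightarrow> group G \<and> topspace T = carrier G \<and>
     continuous_map (prod_topology T T) T (\<lambda>(x, y). x \<otimes>\<^bsub>G\<^esub> y) \<and>
     continuous_map T T (\<lambda>x. inv\<^bsub>G\<^esub> x)"

definition profinite_group :: "('a, 'm) monoid_scheme \<Rightarrow> 'a topology \<Rightarrow> bool" where
  "profinite_group G T \<longleftrightarrow> topological_group G T \<and> compact_space T \<and> Hausdorff_space T \<and>
     (\<forall>x\<in>topspace T. connected_component_of_set T x = {x})"

definition pro_p_group :: "('a, 'm) monoid_scheme \<Rightarrow> 'a topology \<Rightarrow> nat \<Rightarrow> bool" where
  "pro_p_group G T p \<longleftrightarrow> profinite_group G T \<and>
     (\<forall>N. N \<lhd> G \<and> openin T N \<longrightarrow> (\<exists>k. card (rcosets\<^bsub>G\<^esub> N) = p ^ k))"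

text \<open>(Closed) subgroups: as in the paper, "subgroup" means closed subgroup.\<close>
definition closed_subgroup :: "('a, 'm) monoid_scheme \<Rightarrow> 'a topology \<Rightarrow> 'a set \<Rightarrow> bool" where
  "closed_subgroup G T H \<longleftrightarrow> subgroup H G \<and> closedin T H"

definition open_subgroup :: "('a, 'm) monoid_scheme \<Rightarrow> 'a topology \<Rightarrow> 'a set \<Rightarrow> bool" where
  "open_subgroup G T U \<longleftrightarrow> subgroup U G \<and> openin T U"

definition maximal_subgroup_of :: "('a, 'm) monoid_scheme \<Rightarrow> 'a topology \<Rightarrow> 'a set \<Rightarrow> 'a set \<Rightarrow> bool" where
  "maximal_subgroup_of G T H M \<longleftrightarrow> closed_subgroup G T M \<and> M \<subset> H \<and>
     (\<forall>L. closed_subgroup G T L \<and> M \<subseteq> L \<and> L \<subseteq> H \<longrightarrow> L = M \<or> L = H)"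

text \<open>Frattini subgroup of the closed subgroup H: intersection of its maximal subgroups
  (H itself if there are none).\<close>
definition frattini :: "('a, 'm) monoid_scheme \<Rightarrow> 'a topology \<Rightarrow> 'a set \<Rightarrow> 'a set" where
  "frattini G T H = H \<inter> \<Inter> {M. maximal_subgroup_of G T H M}"

definition hierarchical :: "('a, 'm) monoid_scheme \<Rightarrow> nat \<Rightarrow> 'a set \<Rightarrow> 'a set \<Rightarrow> bool" where
  "hierarchical G p K H \<longleftrightarrow> H \<subseteq> K \<and> K \<subseteq> carrier G \<and>
     (\<forall>x\<in>carrier G. x [^]\<^bsub>G\<^esub> p \<in> H \<longrightarrow> x \<in> K)"

definition strongly_frattini_resistant :: "('a, 'm) monoid_scheme \<Rightarrow> 'a topology \<Rightarrow> nat \<Rightarrow> bool" where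
  "strongly_frattini_resistant G T p \<longleftrightarrow>
     (\<forall>H. closed_subgroup G T H \<longrightarrow> hierarchical G p H (frattini G T H))"

definition frattini_cover ::
  "('a, 'm) monoid_scheme \<Rightarrow> 'a topology \<Rightarrow> ('b, 'n) monoid_scheme \<Rightarrow> 'b topology \<Rightarrow> ('a \<Rightarrow> 'b) \<Rightarrow> bool" where
  "frattini_cover G T K TK \<phi> \<longleftrightarrow> \<phi> \<in> hom G K \<and> \<phi> ` carrier G = carrier K \<and>
     continuous_map T TK \<phi> \<and>
     {x \<in> carrier G. \<phi> x = \<one>\<^bsub>K\<^esub>} \<subseteq> frattini G T (carrier G)"

end

theory Submission
  imports Defs
begin

lemma tube_open:
  assumes "compact_space T" "Hausdorff_space T"
    and f: "continuous_map (prod_topology T T) T f"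
    and C: "closedin T C" and Op: "openin T Op"
  shows "openin T {g \<in> topspace T. \<forall>y\<in>C. f (y,g) \<in> Op}"
proof -
  define Z where "Z = {z \<in> topspace (prod_topology T T). fst z \<in> C \<and> f z \<in> topspace T - Op}"
  have "closedin (prod_topology T T) Z"
  proof -
    have 1: "closedin (prod_topology T T) {z \<in> topspace (prod_topology T T). fst z \<in> C}"
      using closedin_continuous_map_preimage[OF continuous_map_fst C] .
    have 2: "closedin (prod_topology T T) {z \<in> topspace (prod_topology T T). f z \<in> topspace T - Op}"
      using closedin_continuous_map_preimage[OF f] Op by blast
    have "Z = {z \<in> topspace (prod_topology T T). fst z \<in> C} \<inter> {z \<in> topspace (prod_topology T T). f z \<in> topspace T - Op}"
      unfolding Z_def by blast
    then show ?thesis using closedin_Int[OF 1 2] by simp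
  qed
  then have "compactin (prod_topology T T) Z"
    using closedin_compact_space compact_space_prod_topology assms(1) by blast
  then have "compactin T (snd ` Z)"
    using image_compactin continuous_map_snd by blast
  then have cl: "closedin T (snd ` Z)" using compactin_imp_closedin assms(2) by blast
  have "{g \<in> topspace T. \<forall>y\<in>C. f (y,g) \<in> Op} = topspace T - snd ` Z"
  proof -
    have "C \<subseteq> topspace T" using C closedin_subset by blast
    then show ?thesis unfolding Z_def by (auto simp: image_iff) (use continuous_map_image_subset_topspace[OF f] in force)+
  qed
  then show ?thesis using cl by (simp add: openin_diff)
qed


context group begin
lemma gA1: "x \<in> carrier G \<Longrightarrow> y \<in> carrier G \<Longrightarrow> inv x \<otimes> (x \<otimes> y) = y"
  by (simp add: m_assoc[symmetric])
lemma gA2: "x \<in> carrier G \<Longrightarrow> y \<in> carrier G \<Longrightarrow> x \<otimes> (inv x \<otimes> y) = y"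
  by (simp add: m_assoc[symmetric])
lemma gA3: "x \<in> carrier G \<Longrightarrow> y \<in> carrier G \<Longrightarrow> (y \<otimes> x) \<otimes> inv x = y"
  by (simp add: m_assoc)
lemma gA4: "x \<in> carrier G \<Longrightarrow> y \<in> carrier G \<Longrightarrow> (y \<otimes> inv x) \<otimes> x = y"
  by (simp add: m_assoc)
lemma conj_mult: "x \<in> carrier G \<Longrightarrow> a \<in> carrier G \<Longrightarrow> b \<in> carrier G \<Longrightarrow>
   x \<otimes> (a \<otimes> b) \<otimes> inv x = (x \<otimes> a \<otimes> inv x) \<otimes> (x \<otimes> b \<otimes> inv x)"
  by (simp add: m_assoc gA1)
lemma conj_inv: "x \<in> carrier G \<Longrightarrow> a \<in> carrier G \<Longrightarrow>
   x \<otimes> inv a \<otimes> inv x = inv (x \<otimes> a \<otimes> inv x)"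
  by (simp add: m_assoc inv_mult_group)
lemma conj_comp: "x \<in> carrier G \<Longrightarrow> y \<in> carrier G \<Longrightarrow> a \<in> carrier G \<Longrightarrow>
   (x \<otimes> y) \<otimes> a \<otimes> inv (x \<otimes> y) = x \<otimes> (y \<otimes> a \<otimes> inv y) \<otimes> inv x"
  by (simp add: m_assoc inv_mult_group)
end


locale PG =
  fixes G (structure) and T and p
  assumes pro: "pro_p_group G T p"
begin

lemma grp: "group G" using pro by (simp add: pro_p_group_def profinite_group_def topological_group_def)
lemma top[simp]: "topspace T = carrier G" using pro by (simp add: pro_p_group_def profinite_group_def topological_group_def)
lemma mcont: "continuous_map (prod_topology T T) T (\<lambda>(x, y). x \<otimes> y)" using pro by (simp add: pro_p_group_def profinite_group_def topological_group_def)
lemma icont: "continuous_map T T (\<lambda>x. inv x)" using pro by (simp add: pro_p_group_def profinite_group_def topological_group_def)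
lemma cpt: "compact_space T" using pro by (simp add: pro_p_group_def profinite_group_def)
lemma hd: "Hausdorff_space T" using pro by (simp add: pro_p_group_def profinite_group_def)
lemma tdis: "x \<in> carrier G \<Longrightarrow> connected_component_of_set T x = {x}" using pro unfolding pro_p_group_def profinite_group_def by simp
lemma idx: "N \<lhd> G \<Longrightarrow> openin T N \<Longrightarrow> \<exists>k. card (rcosets N) = p ^ k" using pro by (simp add: pro_p_group_def)

end

sublocale PG \<subseteq> group G by (rule grp)

context PG begin

lemma pcont:
  assumes "continuous_map Y T f" "continuous_map Y T g"
  shows "continuous_map Y T (\<lambda>z. f z \<otimes> g z)"
proof -
  have "continuous_map Y (prod_topology T T) (\<lambda>z. (f z, g z))"
    using assms by (simp add: continuous_map_paired)
  from continuous_map_compose[OF this mcont] show ?thesis by (simp add: o_def)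
qed

lemma icont2: "continuous_map Y T f \<Longrightarrow> continuous_map Y T (\<lambda>z. inv (f z))"
  using continuous_map_compose[OF _ icont] by (simp add: o_def)

lemma cid: "continuous_map T T (\<lambda>y. y)" using continuous_map_id by (simp add: id_def)
lemma ccon: "a \<in> carrier G \<Longrightarrow> continuous_map T T (\<lambda>y. a)" by simp

lemma lcont: "a \<in> carrier G \<Longrightarrow> continuous_map T T (\<lambda>y. a \<otimes> y)"
  by (rule pcont[OF ccon cid])

lemma rcont: "a \<in> carrier G \<Longrightarrow> continuous_map T T (\<lambda>y. y \<otimes> a)"
  by (rule pcont[OF cid ccon])

lemma lcos_pre: assumes "V \<subseteq> carrier G" "a \<in> carrier G" shows "a <# V = {y \<in> topspace T. inv a \<otimes> y \<in> V}"
proof (intro Set.set_eqI iffI)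
  fix y assume "y \<in> a <# V"
  then obtain v where v: "v \<in> V" "y = a \<otimes> v" unfolding l_coset_def by blast
  have vc: "v \<in> carrier G" using v assms by blast
  have "inv a \<otimes> y = v" using v vc assms by (metis inv_closed l_inv l_one m_assoc)
  then show "y \<in> {y \<in> topspace T. inv a \<otimes> y \<in> V}" using v vc assms by auto
next
  fix y assume "y \<in> {y \<in> topspace T. inv a \<otimes> y \<in> V}"
  then have y: "y \<in> carrier G" "inv a \<otimes> y \<in> V" by auto
  have "y = a \<otimes> (inv a \<otimes> y)" using y assms by (metis inv_closed r_inv l_one m_assoc)
  then show "y \<in> a <# V" using y unfolding l_coset_def by blast
qed

lemma rcos_pre: assumes "V \<subseteq> carrier G" "a \<in> carrier G" shows "V #> a = {y \<in> topspace T. y \<otimes> inv a \<in> V}"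
proof (intro Set.set_eqI iffI)
  fix y assume "y \<in> V #> a"
  then obtain v where v: "v \<in> V" "y = v \<otimes> a" unfolding r_coset_def by blast
  have vc: "v \<in> carrier G" using v assms by blast
  have "y \<otimes> inv a = v" using v vc assms by (metis inv_closed r_inv r_one m_assoc)
  then show "y \<in> {y \<in> topspace T. y \<otimes> inv a \<in> V}" using v vc assms by auto
next
  fix y assume "y \<in> {y \<in> topspace T. y \<otimes> inv a \<in> V}"
  then have y: "y \<in> carrier G" "y \<otimes> inv a \<in> V" by auto
  have "y = (y \<otimes> inv a) \<otimes> a" using y assms by (metis inv_closed l_inv r_one m_assoc)
  then show "y \<in> V #> a" using y unfolding r_coset_def by blast
qed

lemma open_lcos: "openin T V \<Longrightarrow> a \<in> carrier G \<Longrightarrow> openin T (a <# V)"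
  using lcos_pre[of V a] openin_subset[of T V] openin_continuous_map_preimage[OF lcont[of "inv a"]] by auto

lemma open_rcos: "openin T V \<Longrightarrow> a \<in> carrier G \<Longrightarrow> openin T (V #> a)"
  using rcos_pre[of V a] openin_subset[of T V] openin_continuous_map_preimage[OF rcont[of "inv a"]] by auto

lemma closed_rcos: "closedin T V \<Longrightarrow> a \<in> carrier G \<Longrightarrow> closedin T (V #> a)"
  using rcos_pre[of V a] closedin_subset[of T V] closedin_continuous_map_preimage[OF rcont[of "inv a"]] by auto

end

context PG begin

lemma lcos_mem: "y \<in> g <# V \<longleftrightarrow> (\<exists>v\<in>V. y = g \<otimes> v)" unfolding l_coset_def by blast
lemma rcos_mem: "y \<in> V #> g \<longleftrightarrow> (\<exists>v\<in>V. y = v \<otimes> g)" unfolding r_coset_def by blast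

lemma lcos_self: assumes "subgroup V G" "g \<in> carrier G" shows "g \<in> g <# V"
proof -
  have one: "\<one> \<in> V" using subgroup.one_closed[OF assms(1)] .
  have "g \<in> {g \<otimes> \<one>}" using assms(2) by simp
  then show ?thesis unfolding l_coset_def by (rule UN_I[OF one])
qed

lemma open_super:
  assumes "subgroup V G" "openin T V" "subgroup J G" "V \<subseteq> J"
  shows "openin T J"
proof -
  have eq: "J = (\<Union>j\<in>J. j <# V)"
  proof
    show "J \<subseteq> (\<Union>j\<in>J. j <# V)"
    proof
      fix j assume j: "j \<in> J"
      show "j \<in> (\<Union>j\<in>J. j <# V)" using j lcos_self[OF assms(1) subgroup.mem_carrier[OF assms(3) j]] by (rule UN_I)
    qed
    show "(\<Union>j\<in>J. j <# V) \<subseteq> J"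
    proof
      fix y assume "y \<in> (\<Union>j\<in>J. j <# V)"
      then obtain j where j: "j \<in> J" "y \<in> j <# V" by (rule UN_E)
      then obtain v where "v \<in> V" "y = j \<otimes> v" unfolding lcos_mem by blast
      then show "y \<in> J" using j(1) subgroup.m_closed[OF assms(3), of j v] assms(4) by blast
    qed
  qed
  have o: "openin T (\<Union>j\<in>J. j <# V)"
    by (rule openin_Union) (auto intro!: open_lcos[OF assms(2)] subgroup.mem_carrier[OF assms(3)])
  show ?thesis by (subst eq) (rule o)
qed

lemma osc1: assumes "subgroup V G" "g \<in> carrier G" "g \<notin> V" "v \<in> V" shows "g \<otimes> v \<notin> V"
proof
  assume a: "g \<otimes> v \<in> V"
  have v: "v \<in> carrier G" using subgroup.mem_carrier[OF assms(1,4)] .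
  have "(g \<otimes> v) \<otimes> inv v \<in> V" using subgroup.m_closed[OF assms(1) a subgroup.m_inv_closed[OF assms(1,4)]] .
  moreover have "(g \<otimes> v) \<otimes> inv v = g" using gA3[OF v assms(2)] .
  ultimately show False using assms(3) by simp
qed

lemma osc2: assumes "subgroup V G" shows "topspace T - V = (\<Union>g\<in>carrier G - V. g <# V)"
proof
  show "topspace T - V \<subseteq> (\<Union>g\<in>carrier G - V. g <# V)"
  proof
    fix g assume g: "g \<in> topspace T - V"
    then have "g \<in> carrier G - V" by simp
    then show "g \<in> (\<Union>g\<in>carrier G - V. g <# V)" by (rule UN_I) (rule lcos_self[OF assms(1)], use g in simp)
  qed
  show "(\<Union>g\<in>carrier G - V. g <# V) \<subseteq> topspace T - V"
  proof
    fix y assume "y \<in> (\<Union>g\<in>carrier G - V. g <# V)"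
    then obtain g where g0: "g \<in> carrier G - V" "y \<in> g <# V" by (rule UN_E)
    then obtain v where "v \<in> V" "y = g \<otimes> v" unfolding lcos_mem by blast
    then have g: "g \<in> carrier G" "g \<notin> V" "v \<in> V" "y = g \<otimes> v" using g0 by auto
    have v: "v \<in> carrier G" using subgroup.mem_carrier[OF assms(1) g(3)] .
    have "y \<in> carrier G" unfolding g(4) using g(1) v by (rule m_closed)
    then show "y \<in> topspace T - V" using osc1[OF assms g(1-3)] g(4) top by blast
  qed
qed

lemma open_subgroup_closed:
  assumes "subgroup V G" "openin T V"
  shows "closedin T V"
proof -
  have "openin T (\<Union>g\<in>carrier G - V. g <# V)"
    by (rule openin_Union) (auto intro!: open_lcos[OF assms(2)])
  then have "openin T (topspace T - V)" unfolding osc2[OF assms(1)] .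
  moreover have "V \<subseteq> topspace T" using subgroup.subset[OF assms(1)] by simp
  ultimately show ?thesis unfolding closedin_def by blast
qed

end

context PG begin

lemma clopen_sep:
  assumes C: "closedin T C" and n1: "\<one> \<notin> C"
  shows "\<exists>W. openin T W \<and> closedin T W \<and> \<one> \<in> W \<and> W \<inter> C = {}"
proof -
  have "separated_between T {\<one>} C"
  proof (rule cut_wire_fence_theorem_gen)
    show "compact_space T" by (rule cpt)
    show "Hausdorff_space T \<or> regular_space T \<or> normal_space T" using hd by (rule disjI1)
    show "compactin T {\<one>}" by simp
    show "closedin T C" by (rule C)
    fix D assume D: "connectedin T D"
    show "disjnt D {\<one>} \<or> disjnt D C"
    proof (rule ccontr)
      assume "\<not> (disjnt D {\<one>} \<or> disjnt D C)"
      then have d1: "\<one> \<in> D" and "\<exists>c. c \<in> D \<and> c \<in> C" unfolding disjnt_iff by blast+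
      then obtain c where c: "c \<in> D" "c \<in> C" by blast
      have "D \<subseteq> connected_component_of_set T \<one>" by (rule connected_component_of_maximal[OF D d1])
      then have "D \<subseteq> {\<one>}" using tdis[OF one_closed] by simp
      then have "c = \<one>" using c by blast
      then show False using c n1 by simp
    qed
  qed
  then obtain U V where UV: "openin T U" "openin T V" "U \<union> V = topspace T" "disjnt U V" "{\<one>} \<subseteq> U" "C \<subseteq> V"
    unfolding separated_between_def by blast
  have "topspace T - U = V" using UV(2,3,4) openin_subset[OF UV(2)] unfolding disjnt_def by blast
  then have "closedin T U" using UV(2) openin_subset[OF UV(1)] unfolding closedin_def by simp
  moreover have "U \<inter> C = {}" using UV(4,6) unfolding disjnt_def by blast
  ultimately show ?thesis using UV(1,5) by blast
qed

lemma open_subgroup_in: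
  assumes Wo: "openin T W" and Wc: "closedin T W" and W1: "\<one> \<in> W"
  shows "\<exists>S. subgroup S G \<and> openin T S \<and> S \<subseteq> W"
proof -
  have Wsub: "W \<subseteq> carrier G" using openin_subset[OF Wo] by simp
  define f1 where "f1 = (\<lambda>z. fst z \<otimes> snd z)"
  define f2 where "f2 = (\<lambda>z. fst z \<otimes> inv (snd z))"
  have c1: "continuous_map (prod_topology T T) T f1" unfolding f1_def
    by (rule pcont[OF continuous_map_fst continuous_map_snd])
  have c2: "continuous_map (prod_topology T T) T f2" unfolding f2_def
    by (rule pcont[OF continuous_map_fst icont2[OF continuous_map_snd]])
  have o1: "openin T {g \<in> topspace T. \<forall>y\<in>W. f1 (y,g) \<in> W}" by (rule tube_open[OF cpt hd c1 Wc Wo])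
  have o2: "openin T {g \<in> topspace T. \<forall>y\<in>W. f2 (y,g) \<in> W}" by (rule tube_open[OF cpt hd c2 Wc Wo])
  define S where "S = {g \<in> carrier G. \<forall>y\<in>W. y \<otimes> g \<in> W \<and> y \<otimes> inv g \<in> W}"
  have "S = {g \<in> topspace T. \<forall>y\<in>W. f1 (y,g) \<in> W} \<inter> {g \<in> topspace T. \<forall>y\<in>W. f2 (y,g) \<in> W}"
    unfolding S_def f1_def f2_def by (simp add: set_eq_iff) blast
  then have So: "openin T S" using openin_Int[OF o1 o2] by simp
  have Ssub: "S \<subseteq> carrier G" unfolding S_def by blast
  have one: "\<one> \<in> S" unfolding S_def using Wsub by auto
  have inv: "inv a \<in> S" if a: "a \<in> S" for a
  proof -
    have ac: "a \<in> carrier G" using a unfolding S_def by blast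
    have "\<forall>y\<in>W. y \<otimes> inv a \<in> W \<and> y \<otimes> inv (inv a) \<in> W" using a ac unfolding S_def by simp
    then show ?thesis unfolding S_def using ac by simp
  qed
  have mult: "a \<otimes> b \<in> S" if a: "a \<in> S" and b: "b \<in> S" for a b
  proof -
    have ac: "a \<in> carrier G" using a unfolding S_def by blast
    have bc: "b \<in> carrier G" using b unfolding S_def by blast
    have "y \<otimes> (a \<otimes> b) \<in> W \<and> y \<otimes> inv (a \<otimes> b) \<in> W" if y: "y \<in> W" for y
    proof
      have yc: "y \<in> carrier G" using y Wsub by blast
      have "y \<otimes> a \<in> W" using a y unfolding S_def by blast
      then have "(y \<otimes> a) \<otimes> b \<in> W" using b unfolding S_def by blast
      then show "y \<otimes> (a \<otimes> b) \<in> W" using yc ac bc by (simp add: m_assoc)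
      have "y \<otimes> inv b \<in> W" using b y unfolding S_def by blast
      then have "(y \<otimes> inv b) \<otimes> inv a \<in> W" using a unfolding S_def by blast
      then show "y \<otimes> inv (a \<otimes> b) \<in> W" using yc ac bc by (simp add: m_assoc inv_mult_group)
    qed
    then show ?thesis unfolding S_def using ac bc by simp
  qed
  have sg: "subgroup S G" by (rule subgroupI[OF Ssub _ inv mult]) (use one in blast)
  have "S \<subseteq> W"
  proof
    fix g assume g: "g \<in> S"
    then have "\<one> \<otimes> g \<in> W" using W1 unfolding S_def by blast
    moreover have "g \<in> carrier G" using g Ssub by blast
    ultimately show "g \<in> W" by simp
  qed
  then show ?thesis using sg So by blast
qed

lemma open_normal_in:
  assumes Ssg: "subgroup S G" and So: "openin T S"
  shows "\<exists>N. N \<lhd> G \<and> openin T N \<and> N \<subseteq> S"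
proof -
  define f where "f = (\<lambda>z. fst z \<otimes> snd z \<otimes> inv (fst z))"
  have c: "continuous_map (prod_topology T T) T f" unfolding f_def
    by (rule pcont[OF pcont[OF continuous_map_fst continuous_map_snd] icont2[OF continuous_map_fst]])
  have o: "openin T {g \<in> topspace T. \<forall>y\<in>topspace T. f (y,g) \<in> S}" by (rule tube_open[OF cpt hd c closedin_topspace So])
  define N where "N = {g \<in> carrier G. \<forall>y\<in>carrier G. y \<otimes> g \<otimes> inv y \<in> S}"
  have No: "openin T N" using o unfolding N_def f_def by simp
  have Nsub: "N \<subseteq> carrier G" unfolding N_def by blast
  have one: "\<one> \<in> N" unfolding N_def using subgroup.one_closed[OF Ssg] by simp
  have inv: "inv a \<in> N" if a: "a \<in> N" for a
  proof -
    have ac: "a \<in> carrier G" using a unfolding N_def by blast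
    have "y \<otimes> inv a \<otimes> inv y \<in> S" if y: "y \<in> carrier G" for y
    proof -
      have "y \<otimes> a \<otimes> inv y \<in> S" using a y unfolding N_def by blast
      then have "inv (y \<otimes> a \<otimes> inv y) \<in> S" by (rule subgroup.m_inv_closed[OF Ssg])
      then show ?thesis using conj_inv[OF y ac] by simp
    qed
    then show ?thesis unfolding N_def using ac by simp
  qed
  have mult: "a \<otimes> b \<in> N" if a: "a \<in> N" and b: "b \<in> N" for a b
  proof -
    have ac: "a \<in> carrier G" using a unfolding N_def by blast
    have bc: "b \<in> carrier G" using b unfolding N_def by blast
    have "y \<otimes> (a \<otimes> b) \<otimes> inv y \<in> S" if y: "y \<in> carrier G" for y
    proof -
      have "y \<otimes> a \<otimes> inv y \<in> S" "y \<otimes> b \<otimes> inv y \<in> S" using a b y unfolding N_def by blast+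
      then have "(y \<otimes> a \<otimes> inv y) \<otimes> (y \<otimes> b \<otimes> inv y) \<in> S" by (rule subgroup.m_closed[OF Ssg])
      then show ?thesis using conj_mult[OF y ac bc] by simp
    qed
    then show ?thesis unfolding N_def using ac bc by simp
  qed
  have sg: "subgroup N G" by (rule subgroupI[OF Nsub _ inv mult]) (use one in blast)
  have nrm: "\<forall>x\<in>carrier G. \<forall>h\<in>N. x \<otimes> h \<otimes> inv x \<in> N"
  proof (intro ballI)
    fix x h assume x: "x \<in> carrier G" and h: "h \<in> N"
    have hc: "h \<in> carrier G" using h Nsub by blast
    have "y \<otimes> (x \<otimes> h \<otimes> inv x) \<otimes> inv y \<in> S" if y: "y \<in> carrier G" for y
    proof -
      have "(y \<otimes> x) \<otimes> h \<otimes> inv (y \<otimes> x) \<in> S" using h y x unfolding N_def by simp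
      then show ?thesis using conj_comp[OF y x hc] by simp
    qed
    then show "x \<otimes> h \<otimes> inv x \<in> N" unfolding N_def using x hc by simp
  qed
  have "N \<lhd> G" using sg nrm by (simp add: normal_inv_iff)
  moreover have "N \<subseteq> S"
  proof
    fix g assume g: "g \<in> N"
    then have "\<one> \<otimes> g \<otimes> inv \<one> \<in> S" unfolding N_def by blast
    moreover have "g \<in> carrier G" using g Nsub by blast
    ultimately show "g \<in> S" by simp
  qed
  ultimately show ?thesis using No by blast
qed

end

context group begin

lemma smem: "z \<in> H <#> N \<longleftrightarrow> (\<exists>h\<in>H. \<exists>n\<in>N. z = h \<otimes> n)" unfolding set_mult_def by blast

lemma setmult_sg:
  assumes Hs: "subgroup H G" and Nn: "N \<lhd> G"
  shows "subgroup (H <#> N) G"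
proof -
  have Ns: "subgroup N G" using Nn by (rule normal_imp_subgroup)
  have sub: "H <#> N \<subseteq> carrier G"
  proof
    fix z assume "z \<in> H <#> N"
    then obtain h n where hn: "h \<in> H" "n \<in> N" "z = h \<otimes> n" unfolding smem by blast
    have "h \<in> carrier G" using subgroup.mem_carrier[OF Hs hn(1)] .
    moreover have "n \<in> carrier G" using subgroup.mem_carrier[OF Ns hn(2)] .
    ultimately show "z \<in> carrier G" using hn(3) by simp
  qed
  have one: "\<one> \<in> H <#> N"
  proof -
    have "\<one> = \<one> \<otimes> \<one>" by simp
    then show ?thesis unfolding smem using subgroup.one_closed[OF Hs] subgroup.one_closed[OF Ns] by blast
  qed
  have inv: "inv z \<in> H <#> N" if z: "z \<in> H <#> N" for z
  proof -
    obtain h n where hn: "h \<in> H" "n \<in> N" "z = h \<otimes> n" using z unfolding smem by blast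
    have hc: "h \<in> carrier G" using subgroup.mem_carrier[OF Hs hn(1)] .
    have nc: "n \<in> carrier G" using subgroup.mem_carrier[OF Ns hn(2)] .
    have e: "inv z = inv h \<otimes> (h \<otimes> inv n \<otimes> inv h)" using hc nc hn(3) by (simp add: m_assoc inv_mult_group gA1)
    have "inv h \<in> H" using subgroup.m_inv_closed[OF Hs hn(1)] .
    moreover have "h \<otimes> inv n \<otimes> inv h \<in> N"
      using normal.inv_op_closed2[OF Nn hc subgroup.m_inv_closed[OF Ns hn(2)]] .
    ultimately show ?thesis unfolding smem using e by blast
  qed
  have mult: "a \<otimes> b \<in> H <#> N" if a: "a \<in> H <#> N" and b: "b \<in> H <#> N" for a b
  proof -
    obtain h1 n1 where 1: "h1 \<in> H" "n1 \<in> N" "a = h1 \<otimes> n1" using a unfolding smem by blast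
    obtain h2 n2 where 2: "h2 \<in> H" "n2 \<in> N" "b = h2 \<otimes> n2" using b unfolding smem by blast
    have h1c: "h1 \<in> carrier G" using subgroup.mem_carrier[OF Hs 1(1)] .
    have n1c: "n1 \<in> carrier G" using subgroup.mem_carrier[OF Ns 1(2)] .
    have h2c: "h2 \<in> carrier G" using subgroup.mem_carrier[OF Hs 2(1)] .
    have n2c: "n2 \<in> carrier G" using subgroup.mem_carrier[OF Ns 2(2)] .
    have e: "a \<otimes> b = (h1 \<otimes> h2) \<otimes> ((inv h2 \<otimes> n1 \<otimes> h2) \<otimes> n2)"
      using h1c n1c h2c n2c 1(3) 2(3) by (simp add: m_assoc gA2)
    have "h1 \<otimes> h2 \<in> H" using subgroup.m_closed[OF Hs 1(1) 2(1)] .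
    moreover have "(inv h2 \<otimes> n1 \<otimes> h2) \<otimes> n2 \<in> N"
      using subgroup.m_closed[OF Ns normal.inv_op_closed1[OF Nn h2c 1(2)] 2(2)] .
    ultimately show ?thesis unfolding smem using e by blast
  qed
  show ?thesis by (rule subgroupI[OF sub _ inv mult]) (use one in blast)
qed

lemma setmult_sup1: "subgroup H G \<Longrightarrow> subgroup N G \<Longrightarrow> H \<subseteq> H <#> N"
proof
  fix h assume Hs: "subgroup H G" and Ns: "subgroup N G" and h: "h \<in> H"
  have "h = h \<otimes> \<one>" using subgroup.mem_carrier[OF Hs h] by simp
  then show "h \<in> H <#> N" unfolding smem using h subgroup.one_closed[OF Ns] by blast
qed

lemma setmult_sup2: "subgroup H G \<Longrightarrow> subgroup N G \<Longrightarrow> N \<subseteq> H <#> N"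
proof
  fix n assume Hs: "subgroup H G" and Ns: "subgroup N G" and n: "n \<in> N"
  have "n = \<one> \<otimes> n" using subgroup.mem_carrier[OF Ns n] by simp
  then show "n \<in> H <#> N" unfolding smem using n subgroup.one_closed[OF Hs] by blast
qed

end

context PG begin

lemma SEP:
  assumes Hs: "subgroup H G" and Hc: "closedin T H" and x: "x \<in> carrier G" "x \<notin> H"
  shows "\<exists>N. N \<lhd> G \<and> openin T N \<and> x \<notin> H <#> N"
proof -
  have C: "closedin T (H #> x)" by (rule closed_rcos[OF Hc x(1)])
  have n1: "\<one> \<notin> H #> x"
  proof
    assume "\<one> \<in> H #> x"
    then obtain h where h: "h \<in> H" "\<one> = h \<otimes> x" unfolding rcos_mem by blast
    have hc: "h \<in> carrier G" using subgroup.mem_carrier[OF Hs h(1)] .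
    have "inv x = h" using inv_equality[OF h(2)[symmetric] x(1) hc] .
    then have "x = inv h" using x(1) by (metis inv_inv)
    then have "x \<in> H" using subgroup.m_inv_closed[OF Hs h(1)] by simp
    then show False using x(2) by simp
  qed
  obtain W where W: "openin T W" "closedin T W" "\<one> \<in> W" "W \<inter> (H #> x) = {}"
    using clopen_sep[OF C n1] by blast
  obtain S where S: "subgroup S G" "openin T S" "S \<subseteq> W" using open_subgroup_in[OF W(1-3)] by blast
  obtain N where N: "N \<lhd> G" "openin T N" "N \<subseteq> S" using open_normal_in[OF S(1,2)] by blast
  have "x \<notin> H <#> N"
  proof
    assume "x \<in> H <#> N"
    then obtain h n where hn: "h \<in> H" "n \<in> N" "x = h \<otimes> n" unfolding smem by blast
    have hc: "h \<in> carrier G" using subgroup.mem_carrier[OF Hs hn(1)] .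
    have nc: "n \<in> carrier G" using subgroup.mem_carrier[OF normal_imp_subgroup[OF N(1)] hn(2)] .
    have "n = inv h \<otimes> x" using hn(3) gA1[OF hc nc] by simp
    then have "n \<in> H #> x" unfolding rcos_mem using subgroup.m_inv_closed[OF Hs hn(1)] by blast
    moreover have "n \<in> W" using hn(2) N(3) S(3) by blast
    ultimately show False using W(4) by blast
  qed
  then show ?thesis using N(1,2) by blast
qed

lemma HN_open:
  assumes Hs: "subgroup H G" and N: "N \<lhd> G" "openin T N"
  shows "subgroup (H <#> N) G" "openin T (H <#> N)" "closedin T (H <#> N)"
proof -
  show sg: "subgroup (H <#> N) G" by (rule setmult_sg[OF Hs N(1)])
  have Ns: "subgroup N G" using N(1) by (rule normal_imp_subgroup)
  show o: "openin T (H <#> N)" by (rule open_super[OF Ns N(2) sg setmult_sup2[OF Hs Ns]])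
  show "closedin T (H <#> N)" by (rule open_subgroup_closed[OF sg o])
qed

end

context group begin

lemma grmem: "y \<in> V #> g \<longleftrightarrow> (\<exists>v\<in>V. y = v \<otimes> g)" unfolding r_coset_def by blast
lemma glmem: "y \<in> g <# V \<longleftrightarrow> (\<exists>v\<in>V. y = g \<otimes> v)" unfolding l_coset_def by blast

lemma lcos_const:
  assumes A: "subgroup A G" and a: "a \<in> A" shows "a <# A = A"
proof (intro Set.set_eqI iffI)
  have ac: "a \<in> carrier G" using subgroup.mem_carrier[OF A a] .
  fix y
  { assume "y \<in> a <# A"
    then obtain v where v: "v \<in> A" "y = a \<otimes> v" unfolding glmem by blast
    then show "y \<in> A" using subgroup.m_closed[OF A a v(1)] by simp }
  { assume y: "y \<in> A"
    have yc: "y \<in> carrier G" using subgroup.mem_carrier[OF A y] .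
    have "y = a \<otimes> (inv a \<otimes> y)" using gA2[OF ac yc] by simp
    moreover have "inv a \<otimes> y \<in> A" using subgroup.m_closed[OF A subgroup.m_inv_closed[OF A a] y] .
    ultimately show "y \<in> a <# A" unfolding glmem by blast }
qed

lemma conjcos:
  assumes A: "subgroup A G" and a: "a \<in> A" and g: "g \<in> carrier G"
  shows "a <# (A #> g) #> inv a = A #> (g \<otimes> inv a)"
proof -
  have ac: "a \<in> carrier G" using subgroup.mem_carrier[OF A a] .
  have As: "A \<subseteq> carrier G" using subgroup.subset[OF A] .
  have "a <# (A #> g) = (a <# A) #> g" by (rule coset_assoc[OF ac g As])
  also have "\<dots> = A #> g" using lcos_const[OF A a] by simp
  finally have "a <# (A #> g) #> inv a = (A #> g) #> inv a" by simp
  also have "\<dots> = A #> (g \<otimes> inv a)" by (rule coset_mult_assoc[OF As g inv_closed[OF ac]])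
  finally show ?thesis .
qed

lemma fixed_coset:
  assumes fin: "finite (carrier G)" and pr: "Factorial_Ring.prime (p::nat)" and ord: "Coset.order G = p ^ n"
    and A: "subgroup A G" and ne: "A \<noteq> carrier G"
  shows "\<exists>g\<in>carrier G. g \<notin> A \<and> (\<forall>a\<in>A. g \<otimes> a \<otimes> inv g \<in> A)"
proof -
  define E where "E = {H. H \<subseteq> carrier G}"
  define \<phi> where "\<phi> = (\<lambda>g. \<lambda>H\<in>E. g <# H #> inv g)"
  define A' where "A' = G\<lparr>carrier := A\<rparr>"
  have act: "group_action A' E \<phi>"
    unfolding A'_def \<phi>_def E_def by (rule group_action.induced_action[OF action_by_conjugation_on_power_set A])
  define Xc where "Xc = rcosets A"
  define Orb where "Orb = (\<lambda>C. orbit A' \<phi> C)"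
  have As: "A \<subseteq> carrier G" using subgroup.subset[OF A] .
  have XcE: "Xc \<subseteq> E"
  proof
    fix C assume "C \<in> Xc"
    then obtain g where g: "g \<in> carrier G" "C = A #> g" unfolding Xc_def RCOSETS_def by blast
    have "C \<subseteq> carrier G" unfolding g(2) by (rule r_coset_subset_G[OF As g(1)])
    then show "C \<in> E" unfolding E_def by blast
  qed
  have orb_eq: "Orb C = {a <# C #> inv a | a. a \<in> A}" if "C \<in> E" for C
    unfolding Orb_def orbit_def A'_def \<phi>_def using that by simp
  have orb_cos: "Orb (A #> g) = {A #> (g \<otimes> inv a) | a. a \<in> A}" if g: "g \<in> carrier G" for g
  proof -
    have "A #> g \<in> Xc" unfolding Xc_def RCOSETS_def using g by blast
    then have "Orb (A #> g) = {a <# (A #> g) #> inv a | a. a \<in> A}" using orb_eq XcE by blast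
    also have "\<dots> = {A #> (g \<otimes> inv a) | a. a \<in> A}"
    proof (rule Collect_cong)
      fix x show "(\<exists>a. x = a <# (A #> g) #> inv a \<and> a \<in> A) = (\<exists>a. x = A #> (g \<otimes> inv a) \<and> a \<in> A)"
        using conjcos[OF A _ g] by blast
    qed
    finally show ?thesis .
  qed
  have orbX: "Orb C \<subseteq> Xc" if C: "C \<in> Xc" for C
  proof
    fix D assume D: "D \<in> Orb C"
    obtain g where g: "g \<in> carrier G" "C = A #> g" using C unfolding Xc_def RCOSETS_def by blast
    obtain a where a: "a \<in> A" "D = A #> (g \<otimes> inv a)" using D orb_cos[OF g(1)] g(2) by blast
    have "g \<otimes> inv a \<in> carrier G" using g(1) subgroup.mem_carrier[OF A subgroup.m_inv_closed[OF A a(1)]] by simp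
    then show "D \<in> Xc" unfolding Xc_def RCOSETS_def a(2) by blast
  qed
  have selfO: "C \<in> Orb C" if "C \<in> Xc" for C
    unfolding Orb_def using group_action.orbit_refl[OF act] that XcE by blast
  have orbs: "Orb C \<in> orbits A' E \<phi>" if "C \<in> Xc" for C
    unfolding Orb_def orbits_def using that XcE by blast
  have disj: "Orb C = Orb D \<or> Orb C \<inter> Orb D = {}" if "C \<in> Xc" "D \<in> Xc" for C D
    using group_action.disjoint_union[OF act orbs[OF that(1)] orbs[OF that(2)]] .
  have finX: "finite Xc"
  proof -
    have "Xc \<subseteq> Pow (carrier G)" using XcE unfolding E_def by blast
    then show ?thesis by (rule finite_subset) (simp add: fin)
  qed
  define OX where "OX = Orb ` Xc"
  have finOX: "finite OX" unfolding OX_def using finX by simp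
  have UOX: "\<Union>OX = Xc" unfolding OX_def using orbX selfO by blast
  have pdOX: "pairwise disjnt OX"
    unfolding pairwise_def OX_def disjnt_def using disj by blast
  have finQ: "finite Q" if "Q \<in> OX" for Q
    using that orbX finX finite_subset unfolding OX_def by blast
  have cardX: "card Xc = sum card OX"
    using card_Union_disjoint[OF pdOX finQ] UOX by simp
  have lag: "card Xc * card A = p ^ n" using lagrange[OF A] ord unfolding Xc_def by simp
  have "card A dvd p ^ n" using lag by (metis dvd_triv_right)
  then obtain b where b: "card A = p ^ b" using divides_primepow_nat[OF pr] by blast
  have ordA': "Coset.order A' = card A" unfolding A'_def Coset.order_def by simp
  have cardQ: "\<exists>i. card Q = p ^ i" if Q: "Q \<in> OX" for Q
  proof -
    obtain C where C: "C \<in> Xc" "Q = Orb C" using Q unfolding OX_def by blast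
    have "card Q * card (stabilizer A' \<phi> C) = p ^ b"
      using group_action.orbit_stabilizer_theorem[OF act, of C] C XcE ordA' b unfolding Orb_def by auto
    then have "card Q dvd p ^ b" by (metis dvd_triv_left)
    then show ?thesis using divides_primepow_nat[OF pr] by blast
  qed
  have "card Xc dvd p ^ n" using lag by (metis dvd_triv_left)
  then obtain c where c: "card Xc = p ^ c" using divides_primepow_nat[OF pr] by blast
  have "c \<noteq> 0"
  proof
    assume "c = 0"
    then have "card A = p ^ n" using lag c by simp
    then have "card A = card (carrier G)" using ord unfolding Coset.order_def by simp
    then have "A = carrier G" using card_subset_eq[OF fin As] by simp
    then show False using ne by simp
  qed
  then have pX: "p dvd card Xc" using c by (simp add: dvd_power)
  define F where "F = {Q \<in> OX. card Q = 1}"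
  have "sum card OX = sum card F + sum card (OX - F)"
    unfolding F_def using finOX by (metis (no_types, lifting) mem_Collect_eq subsetI sum.subset_diff add.commute)
  moreover have "sum card F = card F" unfolding F_def by simp
  moreover have "p dvd sum card (OX - F)"
  proof (rule dvd_sum)
    fix Q assume Q: "Q \<in> OX - F"
    then obtain i where i: "card Q = p ^ i" using cardQ by blast
    have "i \<noteq> 0" using Q i unfolding F_def by auto
    then show "p dvd card Q" using i by (simp add: dvd_power)
  qed
  ultimately have pF: "p dvd card F" using pX cardX by (simp add: dvd_add_left_iff)
  have AX: "A \<in> Xc"
  proof -
    have "A #> \<one> = A" using As by simp
    then show ?thesis unfolding Xc_def RCOSETS_def by (intro UN_I[OF one_closed]) simp
  qed
  have OA: "Orb A = {A}"
  proof -
    have A1: "A #> \<one> = A" using As by simp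
    have e1: "Orb A = {A #> (\<one> \<otimes> inv a) | a. a \<in> A}" using orb_cos[OF one_closed] A1 by simp
    have e2: "A #> (\<one> \<otimes> inv a) = A" if "a \<in> A" for a
    proof -
      have "inv a \<in> A" using subgroup.m_inv_closed[OF A that] .
      moreover have "\<one> \<otimes> inv a = inv a" using subgroup.mem_carrier[OF A that] by simp
      ultimately show ?thesis using subgroup.rcos_const[OF A is_group] by simp
    qed
    have "\<one> \<in> A" using subgroup.one_closed[OF A] .
    then show ?thesis unfolding e1 using e2 by blast
  qed
  have OAF: "Orb A \<in> F"
  proof -
    have "Orb A \<in> OX" unfolding OX_def using AX by (rule imageI)
    moreover have "card (Orb A) = 1" using OA by simp
    ultimately show ?thesis unfolding F_def by blast
  qed
  have finF: "finite F" unfolding F_def using finOX by simp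
  have "card F \<noteq> 0" using finF OAF by auto
  then have "card F \<ge> p" using pF by (simp add: dvd_imp_le)
  then have "card F \<ge> 2" using prime_ge_2_nat[OF pr] by simp
  then obtain Q where Q: "Q \<in> F" "Q \<noteq> Orb A"
  proof -
    assume h: "\<And>Q. Q \<in> F \<Longrightarrow> Q \<noteq> Orb A \<Longrightarrow> thesis"
    show thesis
    proof (rule ccontr)
      assume "\<not> thesis"
      then have "F \<subseteq> {Orb A}" using h by blast
      then have "card F \<le> 1" using card_mono[of "{Orb A}" F] by simp
      then show False using \<open>card F \<ge> 2\<close> by simp
    qed
  qed
  obtain C where C: "C \<in> Xc" "Q = Orb C" using Q(1) unfolding F_def OX_def by blast
  have cQ: "card Q = 1" using Q(1) unfolding F_def by blast
  have QC: "Q = {C}"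
  proof -
    obtain x where "Q = {x}" using cQ card_1_singletonE by blast
    then show ?thesis using selfO[OF C(1)] C(2) by blast
  qed
  obtain g where g: "g \<in> carrier G" "C = A #> g" using C(1) unfolding Xc_def RCOSETS_def by blast
  have gA: "g \<notin> A"
  proof
    assume "g \<in> A"
    then have "C = A" using g(2) subgroup.rcos_const[OF A is_group] by simp
    then show False using Q(2) C(2) by simp
  qed
  have "g \<otimes> a \<otimes> inv g \<in> A" if a: "a \<in> A" for a
  proof -
    have ac: "a \<in> carrier G" using subgroup.mem_carrier[OF A a] .
    have ia: "inv a \<in> A" using subgroup.m_inv_closed[OF A a] .
    have "A #> (g \<otimes> inv (inv a)) \<in> Orb C" using orb_cos[OF g(1)] g(2) ia by blast
    then have "A #> (g \<otimes> a) = A #> g" using QC C(2) g(2) ac by simp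
    moreover have "g \<otimes> a \<in> A #> (g \<otimes> a)" using rcos_self[OF _ A] g(1) ac by simp
    ultimately have "g \<otimes> a \<in> A #> g" by simp
    then obtain a' where a': "a' \<in> A" "g \<otimes> a = a' \<otimes> g" unfolding grmem by blast
    have "g \<otimes> a \<otimes> inv g = a'" using a'(2) gA3[OF g(1) subgroup.mem_carrier[OF A a'(1)]] by simp
    then show ?thesis using a'(1) by simp
  qed
  then show ?thesis using g(1) gA by blast
qed

end

context group begin

lemma maxsub_normal:
  assumes fin: "finite (carrier G)" and pr: "Factorial_Ring.prime (p::nat)" and ord: "Coset.order G = p ^ n"
    and A: "subgroup A G" and ne: "A \<noteq> carrier G"
    and mx: "\<And>J. subgroup J G \<Longrightarrow> A \<subseteq> J \<Longrightarrow> J = A \<or> J = carrier G"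
  shows "\<forall>g\<in>carrier G. \<forall>a\<in>A. g \<otimes> a \<otimes> inv g \<in> A"
proof -
  obtain g0 where g0: "g0 \<in> carrier G" "g0 \<notin> A" "\<forall>a\<in>A. g0 \<otimes> a \<otimes> inv g0 \<in> A"
    using fixed_coset[OF fin pr ord A ne] by blast
  have As: "A \<subseteq> carrier G" using subgroup.subset[OF A] .
  have finA: "finite A" using finite_subset[OF As fin] .
  define Nr where "Nr = {g \<in> carrier G. \<forall>a\<in>A. g \<otimes> a \<otimes> inv g \<in> A}"
  have sub: "Nr \<subseteq> carrier G" unfolding Nr_def by blast
  have one: "\<one> \<in> Nr"
  proof -
    have "\<one> \<otimes> a \<otimes> inv \<one> \<in> A" if "a \<in> A" for a
    proof -
      have "a \<in> carrier G" using that As by blast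
      then show ?thesis using that by simp
    qed
    then show ?thesis unfolding Nr_def by simp
  qed
  have mult: "x \<otimes> y \<in> Nr" if x: "x \<in> Nr" and y: "y \<in> Nr" for x y
  proof -
    have xc: "x \<in> carrier G" using x sub by blast
    have yc: "y \<in> carrier G" using y sub by blast
    have "(x \<otimes> y) \<otimes> a \<otimes> inv (x \<otimes> y) \<in> A" if a: "a \<in> A" for a
    proof -
      have ac: "a \<in> carrier G" using a As by blast
      have "y \<otimes> a \<otimes> inv y \<in> A" using y a unfolding Nr_def by blast
      then have "x \<otimes> (y \<otimes> a \<otimes> inv y) \<otimes> inv x \<in> A" using x unfolding Nr_def by blast
      then show ?thesis using conj_comp[OF xc yc ac] by simp
    qed
    then show ?thesis unfolding Nr_def using xc yc by simp
  qed
  have inv: "inv x \<in> Nr" if x: "x \<in> Nr" for x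
  proof -
    have xc: "x \<in> carrier G" using x sub by blast
    define f where "f = (\<lambda>a. x \<otimes> a \<otimes> inv x)"
    have fA: "f ` A \<subseteq> A" unfolding f_def using x unfolding Nr_def by blast
    have finj: "inj_on f A"
    proof (rule inj_onI)
      fix a b assume a: "a \<in> A" and b: "b \<in> A" and e: "f a = f b"
      have ac: "a \<in> carrier G" using a As by blast
      have bc: "b \<in> carrier G" using b As by blast
      show "a = b" using e ac bc xc unfolding f_def by simp
    qed
    have fAA: "f ` A = A" by (rule endo_inj_surj[OF finA fA finj])
    have "inv x \<otimes> a \<otimes> inv (inv x) \<in> A" if a: "a \<in> A" for a
    proof -
      obtain a' where a': "a' \<in> A" "a = f a'" using a fAA by blast
      have a'c: "a' \<in> carrier G" using a'(1) As by blast
      have "inv x \<otimes> a \<otimes> inv (inv x) = a'" unfolding a'(2) f_def using xc a'c by (simp add: m_assoc gA1)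
      then show ?thesis using a'(1) by simp
    qed
    then show ?thesis unfolding Nr_def using xc by simp
  qed
  have sg: "subgroup Nr G" by (rule subgroupI[OF sub _ inv mult]) (use one in blast)
  have ANr: "A \<subseteq> Nr"
  proof
    fix b assume b: "b \<in> A"
    have bc: "b \<in> carrier G" using b As by blast
    have "b \<otimes> a \<otimes> inv b \<in> A" if a: "a \<in> A" for a
      using subgroup.m_closed[OF A subgroup.m_closed[OF A b a] subgroup.m_inv_closed[OF A b]] .
    then show "b \<in> Nr" unfolding Nr_def using bc by simp
  qed
  have "g0 \<in> Nr" unfolding Nr_def using g0 by simp
  then have "Nr \<noteq> A" using g0(2) by blast
  then have "Nr = carrier G" using mx[OF sg ANr] by blast
  then show ?thesis unfolding Nr_def by blast
qed

end

context group begin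
lemma hom_pre_sg:
  assumes Q: "group Q" and h: "\<pi> \<in> hom G Q" and J: "subgroup J Q"
  shows "subgroup {g \<in> carrier G. \<pi> g \<in> J} G"
proof -
  interpret gh: group_hom G Q \<pi> using Q h is_group unfolding group_hom_def group_hom_axioms_def by blast
  show ?thesis
  proof (rule subgroupI)
    show "{g \<in> carrier G. \<pi> g \<in> J} \<subseteq> carrier G" by blast
    have "\<pi> \<one> \<in> J" using subgroup.one_closed[OF J] by simp
    then show "{g \<in> carrier G. \<pi> g \<in> J} \<noteq> {}" using one_closed by blast
    fix a assume a: "a \<in> {g \<in> carrier G. \<pi> g \<in> J}"
    then have "inv\<^bsub>Q\<^esub> (\<pi> a) \<in> J" using subgroup.m_inv_closed[OF J] by blast
    then show "inv a \<in> {g \<in> carrier G. \<pi> g \<in> J}" using a by simp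
  next
    fix a b assume a: "a \<in> {g \<in> carrier G. \<pi> g \<in> J}" and b: "b \<in> {g \<in> carrier G. \<pi> g \<in> J}"
    then have "\<pi> a \<otimes>\<^bsub>Q\<^esub> \<pi> b \<in> J" using subgroup.m_closed[OF J] by blast
    then show "a \<otimes> b \<in> {g \<in> carrier G. \<pi> g \<in> J}" using a b by simp
  qed
qed
end

context PG begin

lemma pi_eq:
  assumes N: "N \<lhd> G" and z: "z \<in> carrier G" and l: "l \<in> carrier G" and e: "N #> z = N #> l"
  shows "\<exists>n\<in>N. z = l \<otimes> n"
proof -
  have Ns: "subgroup N G" using N by (rule normal_imp_subgroup)
  have "z \<in> N #> l" using rcos_self[OF z Ns] e by simp
  then obtain n where n: "n \<in> N" "z = n \<otimes> l" unfolding grmem by blast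
  have nc: "n \<in> carrier G" using subgroup.mem_carrier[OF Ns n(1)] .
  have "inv l \<otimes> n \<otimes> l \<in> N" using normal.inv_op_closed1[OF N l n(1)] .
  moreover have "z = l \<otimes> (inv l \<otimes> n \<otimes> l)" using n(2) l nc by (simp add: m_assoc gA2)
  ultimately show ?thesis by blast
qed

lemma max_normal:
  assumes pr: "Factorial_Ring.prime p" and Ms: "subgroup M G" and Mc: "closedin T M" and L: "maximal_subgroup_of G T M L"
  shows "\<exists>N. N \<lhd> G \<and> openin T N \<and> N \<inter> M \<subseteq> L \<and> (\<forall>m\<in>M. \<forall>l\<in>L. m \<otimes> l \<otimes> inv m \<in> L)"
proof -
  have Ls: "subgroup L G" and Lc: "closedin T L" and LM: "L \<subset> M"
    and Lmax: "\<And>J. closed_subgroup G T J \<Longrightarrow> L \<subseteq> J \<Longrightarrow> J \<subseteq> M \<Longrightarrow> J = L \<or> J = M"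
    using L unfolding maximal_subgroup_of_def closed_subgroup_def by blast+
  obtain y where y: "y \<in> M" "y \<notin> L" using LM by blast
  have yc: "y \<in> carrier G" using subgroup.mem_carrier[OF Ms y(1)] .
  obtain N where N: "N \<lhd> G" "openin T N" "y \<notin> L <#> N" using SEP[OF Ls Lc yc y(2)] by blast
  have Ns: "subgroup N G" using N(1) by (rule normal_imp_subgroup)
  note LN = HN_open[OF Ls N(1,2)]
  have J0s: "subgroup ((L <#> N) \<inter> M) G" by (rule subgroups_Inter_pair[OF LN(1) Ms])
  have J0c: "closedin T ((L <#> N) \<inter> M)" using LN(3) Mc by (rule closedin_Int)
  have LJ0: "L \<subseteq> (L <#> N) \<inter> M" using setmult_sup1[OF Ls Ns] LM by blast
  have "(L <#> N) \<inter> M = L \<or> (L <#> N) \<inter> M = M"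
    using Lmax[OF _ LJ0] J0s J0c unfolding closed_subgroup_def by blast
  then have J0: "(L <#> N) \<inter> M = L" using y N(3) by blast
  have NML: "N \<inter> M \<subseteq> L" using setmult_sup2[OF Ls Ns] J0 by blast
  have TR: "z \<in> L" if z: "z \<in> M" and l: "l \<in> L" and e: "N #> z = N #> l" for z l
  proof -
    have zc: "z \<in> carrier G" using subgroup.mem_carrier[OF Ms z] .
    have lc: "l \<in> carrier G" using subgroup.mem_carrier[OF Ls l] .
    obtain n where n: "n \<in> N" "z = l \<otimes> n" using pi_eq[OF N(1) zc lc e] by blast
    have "z \<in> L <#> N" unfolding smem using n l by blast
    then show ?thesis using z J0 by blast
  qed
  define Q where "Q = G Mod N"
  define \<pi> where "\<pi> = (\<lambda>a. N #> a)"
  have Qg: "group Q" unfolding Q_def by (rule normal.factorgroup_is_group[OF N(1)])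
  have hom: "\<pi> \<in> hom G Q" unfolding \<pi>_def Q_def by (rule normal.r_coset_hom_Mod[OF N(1)])
  interpret gh: group_hom G Q \<pi> using Qg hom is_group unfolding group_hom_def group_hom_axioms_def by blast
  obtain k where k: "card (rcosets N) = p ^ k" using idx[OF N(1,2)] by blast
  have cQ: "carrier Q = rcosets N" unfolding Q_def FactGroup_def by simp
  have ordQ: "Coset.order Q = p ^ k" unfolding Coset.order_def cQ k ..
  have finQ: "finite (carrier Q)"
  proof (rule ccontr)
    assume "infinite (carrier Q)"
    then have "Coset.order Q = 0" unfolding Coset.order_def by simp
    then show False using ordQ prime_gt_0_nat[OF pr] by simp
  qed
  define Mb where "Mb = \<pi> ` M"
  define Lb where "Lb = \<pi> ` L"
  have Mbs: "subgroup Mb Q" unfolding Mb_def by (rule gh.subgroup_img_is_subgroup[OF Ms])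
  have Lbs: "subgroup Lb Q" unfolding Lb_def by (rule gh.subgroup_img_is_subgroup[OF Ls])
  have LbMb: "Lb \<subseteq> Mb" unfolding Lb_def Mb_def using LM by blast
  define Q' where "Q' = Q\<lparr>carrier := Mb\<rparr>"
  have Q'g: "group Q'" unfolding Q'_def by (rule group.subgroup_imp_group[OF Qg Mbs])
  have cQ': "carrier Q' = Mb" unfolding Q'_def by simp
  have finQ': "finite (carrier Q')" unfolding cQ' using finite_subset[OF subgroup.subset[OF Mbs] finQ] .
  have "card (rcosets\<^bsub>Q\<^esub> Mb) * card Mb = p ^ k" using group.lagrange[OF Qg Mbs] ordQ by simp
  then have "card Mb dvd p ^ k" by (metis dvd_triv_right)
  then obtain j where j: "card Mb = p ^ j" using divides_primepow_nat[OF pr] by blast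
  have ordQ': "Coset.order Q' = p ^ j" unfolding Coset.order_def cQ' j ..
  have Lbs': "subgroup Lb Q'" unfolding Q'_def by (rule group.subgroup_incl[OF Qg Lbs Mbs LbMb])
  have Lbne: "Lb \<noteq> carrier Q'"
  proof
    assume "Lb = carrier Q'"
    then have "\<pi> y \<in> Lb" using y(1) cQ' unfolding Mb_def by blast
    then obtain l where l: "l \<in> L" "\<pi> y = \<pi> l" unfolding Lb_def by blast
    have "y \<in> L" using TR[OF y(1) l(1)] l(2) unfolding \<pi>_def by simp
    then show False using y(2) by simp
  qed
  have Lbmax: "Jb = Lb \<or> Jb = carrier Q'" if Jb: "subgroup Jb Q'" and LJ: "Lb \<subseteq> Jb" for Jb
  proof -
    have JbQ: "subgroup Jb Q" using group.incl_subgroup[OF Qg Mbs] Jb unfolding Q'_def by blast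
    have JbM: "Jb \<subseteq> Mb" using subgroup.subset[OF Jb] cQ' by simp
    define P where "P = {g \<in> carrier G. \<pi> g \<in> Jb}"
    have Ps: "subgroup P G" unfolding P_def by (rule hom_pre_sg[OF Qg hom JbQ])
    have NP: "N \<subseteq> P"
    proof
      fix n assume n: "n \<in> N"
      have nc: "n \<in> carrier G" using subgroup.mem_carrier[OF Ns n] .
      have "\<pi> n = \<one>\<^bsub>Q\<^esub>" unfolding \<pi>_def Q_def using subgroup.rcos_const[OF Ns is_group n] by simp
      then show "n \<in> P" unfolding P_def using nc subgroup.one_closed[OF JbQ] by simp
    qed
    have Po: "openin T P" by (rule open_super[OF Ns N(2) Ps NP])
    have Pc: "closedin T P" by (rule open_subgroup_closed[OF Ps Po])
    define J where "J = P \<inter> M"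
    have Js: "subgroup J G" unfolding J_def by (rule subgroups_Inter_pair[OF Ps Ms])
    have Jc: "closedin T J" unfolding J_def using Pc Mc by (rule closedin_Int)
    have LJ2: "L \<subseteq> J"
    proof
      fix l assume l: "l \<in> L"
      have "l \<in> M" using l LM by blast
      moreover have "\<pi> l \<in> Jb" using l LJ unfolding Lb_def by blast
      moreover have "l \<in> carrier G" using subgroup.mem_carrier[OF Ls l] .
      ultimately show "l \<in> J" unfolding J_def P_def by blast
    qed
    have JM: "J \<subseteq> M" unfolding J_def by blast
    have JJ: "J = L \<or> J = M" using Lmax[OF _ LJ2 JM] Js Jc unfolding closed_subgroup_def by blast
    have JbJ: "Jb = \<pi> ` J"
    proof
      show "\<pi> ` J \<subseteq> Jb" unfolding J_def P_def by blast
      show "Jb \<subseteq> \<pi> ` J"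
      proof
        fix u assume u: "u \<in> Jb"
        then obtain m where m: "m \<in> M" "u = \<pi> m" using JbM unfolding Mb_def by blast
        have "m \<in> carrier G" using subgroup.mem_carrier[OF Ms m(1)] .
        then have "m \<in> J" unfolding J_def P_def using m u by simp
        then show "u \<in> \<pi> ` J" using m(2) by blast
      qed
    qed
    show ?thesis using JJ JbJ cQ' unfolding Lb_def Mb_def by blast
  qed
  have nQ': "\<forall>g\<in>carrier Q'. \<forall>a\<in>Lb. g \<otimes>\<^bsub>Q'\<^esub> a \<otimes>\<^bsub>Q'\<^esub> inv\<^bsub>Q'\<^esub> g \<in> Lb"
    by (rule group.maxsub_normal[OF Q'g finQ' pr ordQ' Lbs' Lbne Lbmax])
  have conj: "m \<otimes> l \<otimes> inv m \<in> L" if m: "m \<in> M" and l: "l \<in> L" for m l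
  proof -
    have mc: "m \<in> carrier G" using subgroup.mem_carrier[OF Ms m] .
    have lc: "l \<in> carrier G" using subgroup.mem_carrier[OF Ls l] .
    have pm: "\<pi> m \<in> Mb" unfolding Mb_def using m by blast
    have pl: "\<pi> l \<in> Lb" unfolding Lb_def using l by blast
    have "\<pi> m \<otimes>\<^bsub>Q'\<^esub> \<pi> l \<otimes>\<^bsub>Q'\<^esub> inv\<^bsub>Q'\<^esub> (\<pi> m) \<in> Lb" using nQ' pm pl cQ' by blast
    then have "\<pi> m \<otimes>\<^bsub>Q\<^esub> \<pi> l \<otimes>\<^bsub>Q\<^esub> inv\<^bsub>Q\<^esub> (\<pi> m) \<in> Lb"
      using group.m_inv_consistent[OF Qg Mbs pm] unfolding Q'_def by simp
    then have "\<pi> (m \<otimes> l \<otimes> inv m) \<in> Lb" using mc lc by simp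
    then obtain l' where l': "l' \<in> L" "\<pi> (m \<otimes> l \<otimes> inv m) = \<pi> l'" unfolding Lb_def by blast
    have lM: "l \<in> M" using l LM by blast
    have "m \<otimes> l \<otimes> inv m \<in> M"
      using subgroup.m_closed[OF Ms subgroup.m_closed[OF Ms m lM] subgroup.m_inv_closed[OF Ms m]] .
    then show ?thesis using TR[OF _ l'(1)] l'(2) unfolding \<pi>_def by blast
  qed
  show ?thesis using N(1,2) NML conj by blast
qed

end

context PG begin

lemma frat_sub: "frattini G T H \<subseteq> H" unfolding frattini_def by blast

lemma frat_mono:
  assumes pr: "Factorial_Ring.prime p" and Hs: "subgroup H G" and Hc: "closedin T H"
    and Ms: "subgroup M G" and Mc: "closedin T M" and HM: "H \<subseteq> M"
    and L: "maximal_subgroup_of G T M L"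
  shows "frattini G T H \<subseteq> L"
proof (cases "H \<subseteq> L")
  case True
  then show ?thesis using frat_sub by blast
next
  case False
  obtain N where N: "N \<lhd> G" "openin T N" "N \<inter> M \<subseteq> L" and cj: "\<forall>m\<in>M. \<forall>l\<in>L. m \<otimes> l \<otimes> inv m \<in> L"
    using max_normal[OF pr Ms Mc L] by blast
  have Ns: "subgroup N G" using N(1) by (rule normal_imp_subgroup)
  have Ls: "subgroup L G" and Lc: "closedin T L" and LM: "L \<subset> M"
    and Lmax: "\<And>J. closed_subgroup G T J \<Longrightarrow> L \<subseteq> J \<Longrightarrow> J \<subseteq> M \<Longrightarrow> J = L \<or> J = M"
    using L unfolding maximal_subgroup_of_def closed_subgroup_def by blast+
  have HLs: "subgroup (H \<inter> L) G" by (rule subgroups_Inter_pair[OF Hs Ls])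
  have HLc: "closedin T (H \<inter> L)" using Hc Lc by (rule closedin_Int)
  have HLmax: "J = H \<inter> L \<or> J = H" if J: "closed_subgroup G T J" "H \<inter> L \<subseteq> J" "J \<subseteq> H" for J
  proof (cases "J \<subseteq> L")
    case True
    then show ?thesis using J by blast
  next
    case False
    then obtain j where j: "j \<in> J" "j \<notin> L" by blast
    have Js: "subgroup J G" using J(1) unfolding closed_subgroup_def by blast
    have jH: "j \<in> H" using j J(3) by blast
    have jM: "j \<in> M" using jH HM by blast
    have jc: "j \<in> carrier G" using subgroup.mem_carrier[OF Js j(1)] .
    define P where "P = {j [^] (k::int) \<otimes> l | k l. l \<in> L}"
    have jkM: "j [^] (k::int) \<in> M" for k using subgroup_int_pow_closed[OF Ms jM] .
    have jkc: "j [^] (k::int) \<in> carrier G" for k using jc by simp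
    have Lsub: "L \<subseteq> carrier G" using subgroup.subset[OF Ls] .
    have Psub: "P \<subseteq> carrier G"
    proof
      fix z assume "z \<in> P"
      then obtain k l where kl: "l \<in> L" "z = j [^] (k::int) \<otimes> l" unfolding P_def by blast
      then show "z \<in> carrier G" using jkc[of k] Lsub by blast
    qed
    have PM: "P \<subseteq> M"
    proof
      fix z assume "z \<in> P"
      then obtain k l where kl: "l \<in> L" "z = j [^] (k::int) \<otimes> l" unfolding P_def by blast
      have "l \<in> M" using kl(1) LM by blast
      then show "z \<in> M" using subgroup.m_closed[OF Ms jkM[of k]] kl(2) by simp
    qed
    have LP: "L \<subseteq> P"
    proof
      fix l assume l: "l \<in> L"
      have "l = j [^] (0::int) \<otimes> l" using l Lsub by auto
      then show "l \<in> P" unfolding P_def using l by blast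
    qed
    have jP: "j \<in> P"
    proof -
      have "j = j [^] (1::int) \<otimes> \<one>" using jc by simp
      then show ?thesis unfolding P_def using subgroup.one_closed[OF Ls] by blast
    qed
    have Pmult: "a \<otimes> b \<in> P" if a: "a \<in> P" and b: "b \<in> P" for a b
    proof -
      obtain k1 l1 where 1: "l1 \<in> L" "a = j [^] (k1::int) \<otimes> l1" using a unfolding P_def by blast
      obtain k2 l2 where 2: "l2 \<in> L" "b = j [^] (k2::int) \<otimes> l2" using b unfolding P_def by blast
      define u where "u = j [^] k1"
      define v where "v = j [^] k2"
      have uc: "u \<in> carrier G" unfolding u_def by (rule jkc)
      have vc: "v \<in> carrier G" unfolding v_def by (rule jkc)
      have l1c: "l1 \<in> carrier G" using 1(1) Lsub by blast
      have l2c: "l2 \<in> carrier G" using 2(1) Lsub by blast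
      have e: "a \<otimes> b = (u \<otimes> v) \<otimes> ((inv v \<otimes> l1 \<otimes> v) \<otimes> l2)"
        unfolding 1(2) 2(2) u_def[symmetric] v_def[symmetric] using uc vc l1c l2c by (simp add: m_assoc gA2)
      have uv: "u \<otimes> v = j [^] (k1 + k2)" unfolding u_def v_def using int_pow_mult[OF jc] by simp
      have ivM: "inv v \<in> M" unfolding v_def using subgroup.m_inv_closed[OF Ms jkM] .
      have "inv v \<otimes> l1 \<otimes> inv (inv v) \<in> L" using cj ivM 1(1) by blast
      then have "inv v \<otimes> l1 \<otimes> v \<in> L" using vc by simp
      then have "(inv v \<otimes> l1 \<otimes> v) \<otimes> l2 \<in> L" using subgroup.m_closed[OF Ls _ 2(1)] by blast
      moreover have "a \<otimes> b = j [^] (k1 + k2) \<otimes> ((inv v \<otimes> l1 \<otimes> v) \<otimes> l2)" using e uv by simp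
      ultimately show ?thesis unfolding P_def by blast
    qed
    have Pinv: "inv a \<in> P" if a: "a \<in> P" for a
    proof -
      obtain k l where kl: "l \<in> L" "a = j [^] (k::int) \<otimes> l" using a unfolding P_def by blast
      define u where "u = j [^] k"
      have uc: "u \<in> carrier G" unfolding u_def by (rule jkc)
      have lc: "l \<in> carrier G" using kl(1) Lsub by blast
      have e: "inv a = inv u \<otimes> (u \<otimes> inv l \<otimes> inv u)"
        unfolding kl(2) u_def[symmetric] using uc lc by (simp add: m_assoc inv_mult_group gA1)
      have iu: "inv u = j [^] (- k)" unfolding u_def using int_pow_neg[OF jc] by simp
      have "u \<otimes> inv l \<otimes> inv u \<in> L" using cj jkM[of k] subgroup.m_inv_closed[OF Ls kl(1)] unfolding u_def by blast
      moreover have "inv a = j [^] (- k) \<otimes> (u \<otimes> inv l \<otimes> inv u)" using e iu by simp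
      ultimately show ?thesis unfolding P_def by blast
    qed
    have Ps: "subgroup P G" by (rule subgroupI[OF Psub _ Pinv Pmult]) (use jP in blast)
    note PN = HN_open[OF Ps N(1,2)]
    have Peq: "P = (P <#> N) \<inter> M"
    proof
      show "P \<subseteq> (P <#> N) \<inter> M" using setmult_sup1[OF Ps Ns] PM by blast
      show "(P <#> N) \<inter> M \<subseteq> P"
      proof
        fix z assume z: "z \<in> (P <#> N) \<inter> M"
        have zPN: "z \<in> P <#> N" and zM: "z \<in> M" using z by blast+
        then obtain q n where qn: "q \<in> P" "n \<in> N" "z = q \<otimes> n" unfolding smem by blast
        have qc: "q \<in> carrier G" using qn(1) Psub by blast
        have nc: "n \<in> carrier G" using subgroup.mem_carrier[OF Ns qn(2)] .
        have "n = inv q \<otimes> z" using qn(3) gA1[OF qc nc] by simp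
        moreover have "inv q \<otimes> z \<in> M"
        proof -
          have qM: "q \<in> M" using qn(1) PM by blast
          show ?thesis using subgroup.m_closed[OF Ms subgroup.m_inv_closed[OF Ms qM] zM] .
        qed
        ultimately have "n \<in> N \<inter> M" using qn(2) by simp
        then have "n \<in> L" using N(3) by blast
        then have "n \<in> P" using LP by blast
        then show "z \<in> P" using Pmult[OF qn(1)] qn(3) by simp
      qed
    qed
    have Pc: "closedin T P" by (subst Peq) (rule closedin_Int[OF PN(3) Mc])
    have "P = L \<or> P = M" using Lmax[OF _ LP PM] Ps Pc unfolding closed_subgroup_def by blast
    then have PeqM: "P = M" using jP j(2) by blast
    have "H \<subseteq> J"
    proof
      fix h assume h: "h \<in> H"
      then have "h \<in> P" using HM PeqM by blast
      then obtain k l where kl: "l \<in> L" "h = j [^] (k::int) \<otimes> l" unfolding P_def by blast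
      have hc: "h \<in> carrier G" using subgroup.mem_carrier[OF Hs h] .
      have lc: "l \<in> carrier G" using kl(1) Lsub by blast
      have jkH: "j [^] k \<in> H" using subgroup_int_pow_closed[OF Hs jH] .
      have "l = inv (j [^] k) \<otimes> h" using kl(2) gA1[OF jkc lc] by simp
      then have "l \<in> H" using subgroup.m_closed[OF Hs subgroup.m_inv_closed[OF Hs jkH] h] by simp
      then have "l \<in> J" using kl(1) J(2) by blast
      moreover have "j [^] k \<in> J" using subgroup_int_pow_closed[OF Js j(1)] .
      ultimately show "h \<in> J" using kl(2) subgroup.m_closed[OF Js] by simp
    qed
    then show ?thesis using J(3) by blast
  qed
  have "maximal_subgroup_of G T H (H \<inter> L)"
    unfolding maximal_subgroup_of_def closed_subgroup_def
    using HLs HLc HLmax False unfolding closed_subgroup_def by blast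
  then have "frattini G T H \<subseteq> H \<inter> L" unfolding frattini_def by blast
  then show ?thesis by blast
qed

end

lemma img_closed:
  assumes "compact_space TX" "Hausdorff_space TY" "continuous_map TX TY f" "closedin TX S"
  shows "closedin TY (f ` S)"
proof -
  have "compactin TX S" using closedin_compact_space assms(1,4) by blast
  then have "compactin TY (f ` S)" using image_compactin assms(3) by blast
  then show ?thesis using compactin_imp_closedin assms(2) by blast
qed

lemma PG_intro: "pro_p_group G T p \<Longrightarrow> PG G T p" unfolding PG_def .

context PG begin

lemma sub_cs:
  assumes Us: "subgroup U G" and Uc: "closedin T U"
  shows "closed_subgroup (G\<lparr>carrier := U\<rparr>) (subtopology T U) L \<longleftrightarrow> subgroup L G \<and> closedin T L \<and> L \<subseteq> U"
proof
  assume a: "closed_subgroup (G\<lparr>carrier := U\<rparr>) (subtopology T U) L"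
  then have s: "subgroup L (G\<lparr>carrier := U\<rparr>)" and c: "closedin (subtopology T U) L" unfolding closed_subgroup_def by blast+
  have "subgroup L G" using incl_subgroup[OF Us s] .
  moreover have "L \<subseteq> U" using subgroup.subset[OF s] by simp
  moreover have "closedin T L" using closedin_trans_full[OF c Uc] .
  ultimately show "subgroup L G \<and> closedin T L \<and> L \<subseteq> U" by blast
next
  assume a: "subgroup L G \<and> closedin T L \<and> L \<subseteq> U"
  then have "subgroup L (G\<lparr>carrier := U\<rparr>)" using subgroup_incl[OF _ Us] by blast
  moreover have "closedin (subtopology T U) L" using a closedin_closed_subtopology[OF Uc] by blast
  ultimately show "closed_subgroup (G\<lparr>carrier := U\<rparr>) (subtopology T U) L" unfolding closed_subgroup_def by blast
qed

end


context PG begin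
lemma main_aux:
  assumes pr: "Factorial_Ring.prime p"
    and hyp: "\<forall>U. open_subgroup G T U \<longrightarrow>
           (\<exists>(K :: ('k, 'n) monoid_scheme) (TK :: 'k topology) (\<phi> :: 'a \<Rightarrow> 'k).
              pro_p_group K TK p \<and>
              frattini_cover (G\<lparr>carrier := U\<rparr>) (subtopology T U) K TK \<phi> \<and>
              (\<forall>M. maximal_subgroup_of K TK (carrier K) M \<longrightarrow>
                   hierarchical K p M (frattini K TK M)))"
  shows "strongly_frattini_resistant G T p"
proof -
  show ?thesis unfolding strongly_frattini_resistant_def
  proof (intro allI impI)
    fix H assume H: "closed_subgroup G T H"
    have Hs: "subgroup H G" and Hc: "closedin T H" using H unfolding closed_subgroup_def by blast+
    show "hierarchical G p H (frattini G T H)" unfolding hierarchical_def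
    proof (intro conjI ballI impI)
      show "frattini G T H \<subseteq> H" by (rule frat_sub)
      show "H \<subseteq> carrier G" by (rule subgroup.subset[OF Hs])
      fix x assume x: "x \<in> carrier G" and xp: "x [^] p \<in> frattini G T H"
      show "x \<in> H"
      proof (rule ccontr)
        assume xH: "x \<notin> H"
        obtain N where N: "N \<lhd> G" "openin T N" "x \<notin> H <#> N" using SEP[OF Hs Hc x xH] by blast
        have Ns: "subgroup N G" using N(1) by (rule normal_imp_subgroup)
        define V where "V = H <#> N"
        have Vs: "subgroup V G" and Vo: "openin T V" and Vc: "closedin T V"
          unfolding V_def using HN_open[OF Hs N(1,2)] by blast+
        have HV: "H \<subseteq> V" unfolding V_def by (rule setmult_sup1[OF Hs Ns])
        have NV: "N \<subseteq> V" unfolding V_def by (rule setmult_sup2[OF Hs Ns])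
        have xV: "x \<notin> V" unfolding V_def by (rule N(3))
        obtain k where k: "card (rcosets N) = p ^ k" using idx[OF N(1,2)] by blast
        have finR: "finite (rcosets N)"
        proof (rule ccontr)
          assume "infinite (rcosets N)"
          then have "card (rcosets N) = 0" by simp
          then show False using k prime_gt_0_nat[OF pr] by simp
        qed
        define Fam where "Fam = {J. subgroup J G \<and> V \<subseteq> J \<and> x \<notin> J}"
        have FamU: "Fam \<subseteq> (\<lambda>S. \<Union>S) ` Pow (rcosets N)"
        proof
          fix J assume J: "J \<in> Fam"
          have Js: "subgroup J G" and VJ: "V \<subseteq> J" using J unfolding Fam_def by blast+
          have "J = \<Union>{C \<in> rcosets N. C \<subseteq> J}"
          proof
            show "J \<subseteq> \<Union>{C \<in> rcosets N. C \<subseteq> J}"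
            proof
              fix g assume g: "g \<in> J"
              have gc: "g \<in> carrier G" using subgroup.mem_carrier[OF Js g] .
              have "N #> g \<in> rcosets N" unfolding RCOSETS_def using gc by blast
              moreover have "N #> g \<subseteq> J"
              proof
                fix z assume "z \<in> N #> g"
                then obtain n where n: "n \<in> N" "z = n \<otimes> g" unfolding grmem by blast
                have "n \<in> J" using n(1) NV VJ by blast
                then show "z \<in> J" using subgroup.m_closed[OF Js _ g] n(2) by simp
              qed
              moreover have "g \<in> N #> g" using rcos_self[OF gc Ns] .
              ultimately show "g \<in> \<Union>{C \<in> rcosets N. C \<subseteq> J}" by blast
            qed
            show "\<Union>{C \<in> rcosets N. C \<subseteq> J} \<subseteq> J" by blast
          qed
          then show "J \<in> (\<lambda>S. \<Union>S) ` Pow (rcosets N)" by blast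
        qed
        have finFam: "finite Fam" using finite_subset[OF FamU] finR by simp
        have VFam: "V \<in> Fam" unfolding Fam_def using Vs xV by blast
        obtain M where MF: "M \<in> Fam" and Mmax: "\<forall>B\<in>Fam. M \<subseteq> B \<longrightarrow> M = B"
          using finite_has_maximal[OF finFam] VFam by blast
        have Ms: "subgroup M G" and VM: "V \<subseteq> M" and xM: "x \<notin> M" using MF unfolding Fam_def by blast+
        have Mo: "openin T M" by (rule open_super[OF Vs Vo Ms VM])
        have Mc: "closedin T M" by (rule open_subgroup_closed[OF Ms Mo])
        have HM: "H \<subseteq> M" using HV VM by blast
        define U where "U = generate G (insert x M)"
        have xMc: "insert x M \<subseteq> carrier G" unfolding insert_subset using x subgroup.subset[OF Ms] by (rule conjI)
        have Us: "subgroup U G" unfolding U_def using xMc by (rule generate_is_subgroup)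
        have xMU: "insert x M \<subseteq> U"
        proof
          fix z assume "z \<in> insert x M"
          then show "z \<in> U" unfolding U_def by (rule generate.incl)
        qed
        have Umin: "U \<subseteq> J" if "subgroup J G" "insert x M \<subseteq> J" for J
          unfolding U_def by (rule generate_subgroup_incl[OF that(2,1)])
        have MU: "M \<subseteq> U" and xU: "x \<in> U" using xMU by blast+
        have Uo: "openin T U" by (rule open_super[OF Ms Mo Us MU])
        have Uc: "closedin T U" by (rule open_subgroup_closed[OF Us Uo])
        have "open_subgroup G T U" unfolding open_subgroup_def using Us Uo by blast
        then obtain K :: "('k, 'n) monoid_scheme" and TK :: "'k topology" and \<phi> :: "'a \<Rightarrow> 'k"
          where Kp: "pro_p_group K TK p"
            and fc: "frattini_cover (G\<lparr>carrier := U\<rparr>) (subtopology T U) K TK \<phi>"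
            and hK: "\<forall>M. maximal_subgroup_of K TK (carrier K) M \<longrightarrow> hierarchical K p M (frattini K TK M)"
          using hyp by blast
        define GU where "GU = G\<lparr>carrier := U\<rparr>"
        define TU where "TU = subtopology T U"
        interpret K: PG K TK p by (rule PG_intro[OF Kp])
        have GUg: "group GU" unfolding GU_def by (rule subgroup_imp_group[OF Us])
        have cGU: "carrier GU = U" unfolding GU_def by simp
        have phom: "\<phi> \<in> hom GU K" and psurj: "\<phi> ` U = carrier K" and pcont: "continuous_map TU TK \<phi>"
          and pker: "{u \<in> U. \<phi> u = \<one>\<^bsub>K\<^esub>} \<subseteq> frattini GU TU U"
          using fc unfolding frattini_cover_def GU_def TU_def by auto
        interpret ph: group_hom GU K \<phi> using GUg phom K.is_group unfolding group_hom_def group_hom_axioms_def by blast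
        have topTU: "topspace TU = U" unfolding TU_def using subgroup.subset[OF Us] by auto
        have cptTU: "compact_space TU" unfolding TU_def
          by (rule compact_space_subtopology[OF closedin_compact_space[OF cpt Uc]])
        have cs: "closed_subgroup GU TU L \<longleftrightarrow> subgroup L G \<and> closedin T L \<and> L \<subseteq> U" for L
          unfolding GU_def TU_def by (rule sub_cs[OF Us Uc])
        have Mmax_U: "maximal_subgroup_of GU TU U M"
          unfolding maximal_subgroup_of_def
        proof (intro conjI allI impI)
          show "closed_subgroup GU TU M" unfolding cs using Ms Mc MU by blast
          show "M \<subset> U" using MU xU xM by blast
          fix L assume L: "closed_subgroup GU TU L \<and> M \<subseteq> L \<and> L \<subseteq> U"
          have Ls: "subgroup L G" using L unfolding cs by blast
          show "L = M \<or> L = U"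
          proof (cases "x \<in> L")
            case True
            then have "insert x M \<subseteq> L" using L by blast
            then have "U \<subseteq> L" using Umin[OF Ls] by blast
            then show ?thesis using L by blast
          next
            case False
            then have "L \<in> Fam" unfolding Fam_def using Ls VM L by blast
            then show ?thesis using Mmax L by blast
          qed
        qed
        have kerM: "u \<in> M" if "u \<in> U" "\<phi> u = \<one>\<^bsub>K\<^esub>" for u
        proof -
          have "u \<in> frattini GU TU U" using pker that by blast
          then show ?thesis using Mmax_U unfolding frattini_def by blast
        qed
        have phi_div: "\<phi> (inv a \<otimes> b) = inv\<^bsub>K\<^esub> (\<phi> a) \<otimes>\<^bsub>K\<^esub> \<phi> b" if a: "a \<in> U" and b: "b \<in> U" for a b
        proof -
          have a': "a \<in> carrier GU" using a cGU by simp
          have b': "b \<in> carrier GU" using b cGU by simp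
          have "\<phi> (inv a \<otimes> b) = \<phi> (inv\<^bsub>GU\<^esub> a \<otimes>\<^bsub>GU\<^esub> b)"
            using m_inv_consistent[OF Us a] unfolding GU_def by simp
          also have "\<dots> = inv\<^bsub>K\<^esub> (\<phi> a) \<otimes>\<^bsub>K\<^esub> \<phi> b"
            using ph.hom_mult[OF ph.G.inv_closed[OF a'] b'] ph.hom_inv[OF a'] by simp
          finally show ?thesis .
        qed
        have phi_one: "\<phi> (inv a \<otimes> b) = \<one>\<^bsub>K\<^esub>" if a: "a \<in> U" and b: "b \<in> U" and e: "\<phi> a = \<phi> b" for a b
        proof -
          have "\<phi> b \<in> carrier K" using ph.hom_closed[of b] b cGU by simp
          then show ?thesis using phi_div[OF a b] e by simp
        qed
        have KM: "u \<in> M" if u: "u \<in> U" and m: "m \<in> M" and e: "\<phi> u = \<phi> m" for u m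
        proof -
          have mU: "m \<in> U" using m MU by blast
          have uc: "u \<in> carrier G" using subgroup.mem_carrier[OF Us u] .
          have mc: "m \<in> carrier G" using subgroup.mem_carrier[OF Us mU] .
          have imU: "inv m \<in> U" using subgroup.m_inv_closed[OF Us mU] .
          have iu: "inv m \<otimes> u \<in> U" using subgroup.m_closed[OF Us imU u] .
          have "\<phi> (inv m \<otimes> u) = \<one>\<^bsub>K\<^esub>" using phi_one[OF mU u e[symmetric]] .
          then have "inv m \<otimes> u \<in> M" using kerM[OF iu] by blast
          then have "m \<otimes> (inv m \<otimes> u) \<in> M" using subgroup.m_closed[OF Ms m] by blast
          then show ?thesis using gA2[OF mc uc] by simp
        qed
        define Mt where "Mt = \<phi> ` M"
        have MGU: "subgroup M GU" unfolding GU_def by (rule subgroup_incl[OF Ms Us MU])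
        have Mts: "subgroup Mt K" unfolding Mt_def by (rule ph.subgroup_img_is_subgroup[OF MGU])
        have closed_img: "closedin TK (\<phi> ` J)" if "closedin T J" "J \<subseteq> U" for J
        proof -
          have "closedin TU J" unfolding TU_def using closedin_closed_subtopology[OF Uc] that by blast
          then show ?thesis by (rule img_closed[OF cptTU K.hd pcont])
        qed
        have Mtc: "closedin TK Mt" unfolding Mt_def by (rule closed_img[OF Mc MU])
        have MtK: "Mt \<subseteq> carrier K" using psurj MU unfolding Mt_def by blast
        have xK: "\<phi> x \<in> carrier K" using psurj xU by blast
        have xMt: "\<phi> x \<notin> Mt"
        proof
          assume "\<phi> x \<in> Mt"
          then obtain m where "m \<in> M" "\<phi> x = \<phi> m" unfolding Mt_def by blast
          then have "x \<in> M" using KM[OF xU] by blast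
          then show False using xM by simp
        qed
        have pre_sg: "subgroup {u \<in> U. \<phi> u \<in> L'} G" if "subgroup L' K" for L'
        proof -
          have "subgroup {g \<in> carrier GU. \<phi> g \<in> L'} GU" by (rule group.hom_pre_sg[OF GUg K.is_group phom that])
          then have "subgroup {u \<in> U. \<phi> u \<in> L'} GU" using cGU by simp
          then show ?thesis using incl_subgroup[OF Us] unfolding GU_def by blast
        qed
        have pre_cl: "closedin T {u \<in> U. \<phi> u \<in> L'}" if "closedin TK L'" for L'
        proof -
          have "closedin TU {u \<in> topspace TU. \<phi> u \<in> L'}" by (rule closedin_continuous_map_preimage[OF pcont that])
          then have "closedin TU {u \<in> U. \<phi> u \<in> L'}" using topTU by simp
          then show ?thesis using closedin_trans_full[OF _ Uc] unfolding TU_def by blast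
        qed
        have Mtmax: "maximal_subgroup_of K TK (carrier K) Mt"
          unfolding maximal_subgroup_of_def
        proof (intro conjI allI impI)
          show "closed_subgroup K TK Mt" unfolding closed_subgroup_def using Mts Mtc by blast
          show "Mt \<subset> carrier K" using MtK xK xMt by blast
          fix L' assume L': "closed_subgroup K TK L' \<and> Mt \<subseteq> L' \<and> L' \<subseteq> carrier K"
          have L's: "subgroup L' K" and L'c: "closedin TK L'" using L' unfolding closed_subgroup_def by blast+
          define Lp where "Lp = {u \<in> U. \<phi> u \<in> L'}"
          have "closed_subgroup GU TU Lp" unfolding cs Lp_def using pre_sg[OF L's] pre_cl[OF L'c] by blast
          moreover have "M \<subseteq> Lp" unfolding Lp_def using MU L' unfolding Mt_def by blast
          moreover have "Lp \<subseteq> U" unfolding Lp_def by blast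
          ultimately have "Lp = M \<or> Lp = U" using Mmax_U unfolding maximal_subgroup_of_def by blast
          then show "L' = Mt \<or> L' = carrier K"
          proof
            assume e: "Lp = M"
            have "L' \<subseteq> Mt"
            proof
              fix k assume k: "k \<in> L'"
              then have "k \<in> \<phi> ` U" using L' psurj by blast
              then obtain u where u: "u \<in> U" "k = \<phi> u" by blast
              then have "u \<in> Lp" unfolding Lp_def using k by blast
              then show "k \<in> Mt" using e u unfolding Mt_def by blast
            qed
            then show ?thesis using L' by blast
          next
            assume e: "Lp = U"
            have "carrier K \<subseteq> L'"
            proof
              fix k assume "k \<in> carrier K"
              then obtain u where u: "u \<in> U" "k = \<phi> u" using psurj by blast
              then have "u \<in> Lp" using e by blast
              then show "k \<in> L'" unfolding Lp_def using u by blast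
            qed
            then show ?thesis using L' by blast
          qed
        qed
        have hier: "\<forall>y\<in>carrier K. y [^]\<^bsub>K\<^esub> p \<in> frattini K TK Mt \<longrightarrow> y \<in> Mt"
          using hK Mtmax unfolding hierarchical_def by blast
        have xpH: "x [^] p \<in> H" using xp frat_sub by blast
        have xpM: "x [^] p \<in> M" using xpH HM by blast
        have pow: "\<phi> (x [^] p) = (\<phi> x) [^]\<^bsub>K\<^esub> p"
        proof -
          have "x [^] p = x [^]\<^bsub>GU\<^esub> p" unfolding GU_def by (rule nat_pow_consistent)
          moreover have "\<phi> (x [^]\<^bsub>GU\<^esub> p) = (\<phi> x) [^]\<^bsub>K\<^esub> p" using ph.hom_nat_pow xU cGU by simp
          ultimately show ?thesis by simp
        qed
        have "\<phi> (x [^] p) \<in> frattini K TK Mt"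
          unfolding frattini_def
        proof (intro IntI InterI)
          show "\<phi> (x [^] p) \<in> Mt" unfolding Mt_def using xpM by blast
          fix L' assume "L' \<in> {L'. maximal_subgroup_of K TK Mt L'}"
          then have L': "maximal_subgroup_of K TK Mt L'" by simp
          have L's: "subgroup L' K" and L'c: "closedin TK L'" and L'M: "L' \<subset> Mt"
            and L'max: "\<And>J. closed_subgroup K TK J \<Longrightarrow> L' \<subseteq> J \<Longrightarrow> J \<subseteq> Mt \<Longrightarrow> J = L' \<or> J = Mt"
            using L' unfolding maximal_subgroup_of_def closed_subgroup_def by blast+
          define Lq where "Lq = M \<inter> {u \<in> U. \<phi> u \<in> L'}"
          have Lqs: "subgroup Lq G" unfolding Lq_def by (rule subgroups_Inter_pair[OF Ms pre_sg[OF L's]])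
          have Lqc: "closedin T Lq" unfolding Lq_def by (rule closedin_Int[OF Mc pre_cl[OF L'c]])
          have Lqmax: "maximal_subgroup_of G T M Lq"
            unfolding maximal_subgroup_of_def
          proof (intro conjI allI impI)
            show "closed_subgroup G T Lq" unfolding closed_subgroup_def using Lqs Lqc by blast
            have "Lq \<subseteq> M" unfolding Lq_def by blast
            moreover have "Lq \<noteq> M"
            proof -
              obtain k where k: "k \<in> Mt" "k \<notin> L'" using L'M by blast
              then obtain m where m: "m \<in> M" "k = \<phi> m" unfolding Mt_def by blast
              then have "m \<notin> Lq" unfolding Lq_def using k by blast
              then show ?thesis using m by blast
            qed
            ultimately show "Lq \<subset> M" by blast
            fix J assume J: "closed_subgroup G T J \<and> Lq \<subseteq> J \<and> J \<subseteq> M"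
            have Js: "subgroup J G" and Jc: "closedin T J" using J unfolding closed_subgroup_def by blast+
            have JU: "J \<subseteq> U" using J MU by blast
            have JGU: "subgroup J GU" unfolding GU_def by (rule subgroup_incl[OF Js Us JU])
            have Jts: "subgroup (\<phi> ` J) K" by (rule ph.subgroup_img_is_subgroup[OF JGU])
            have Jtc: "closedin TK (\<phi> ` J)" by (rule closed_img[OF Jc JU])
            have L'J: "L' \<subseteq> \<phi> ` J"
            proof
              fix k assume k: "k \<in> L'"
              then have "k \<in> Mt" using L'M by blast
              then obtain m where m: "m \<in> M" "k = \<phi> m" unfolding Mt_def by blast
              then have "m \<in> Lq" unfolding Lq_def using k MU by blast
              then show "k \<in> \<phi> ` J" using J m(2) by blast
            qed
            have JMt: "\<phi> ` J \<subseteq> Mt" unfolding Mt_def using J by blast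
            have "\<phi> ` J = L' \<or> \<phi> ` J = Mt" using L'max[OF _ L'J JMt] Jts Jtc unfolding closed_subgroup_def by blast
            then show "J = Lq \<or> J = M"
            proof
              assume e: "\<phi> ` J = L'"
              have "J \<subseteq> Lq" unfolding Lq_def using J JU e by blast
              then show ?thesis using J by blast
            next
              assume e: "\<phi> ` J = Mt"
              have "M \<subseteq> J"
              proof
                fix m assume m: "m \<in> M"
                then have "\<phi> m \<in> \<phi> ` J" using e unfolding Mt_def by blast
                then obtain j where j: "j \<in> J" "\<phi> m = \<phi> j" by blast
                have jM: "j \<in> M" using j(1) J by blast
                have jU: "j \<in> U" using jM MU by blast
                have mU: "m \<in> U" using m MU by blast
                have jc: "j \<in> carrier G" using subgroup.mem_carrier[OF Ms jM] .
                have mc: "m \<in> carrier G" using subgroup.mem_carrier[OF Ms m] .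
                have dM: "inv j \<otimes> m \<in> M" using subgroup.m_closed[OF Ms subgroup.m_inv_closed[OF Ms jM] m] .
                have dU: "inv j \<otimes> m \<in> U" using dM MU by blast
                have "\<phi> (inv j \<otimes> m) = \<one>\<^bsub>K\<^esub>" using phi_one[OF jU mU j(2)[symmetric]] .
                then have "\<phi> (inv j \<otimes> m) \<in> L'" using subgroup.one_closed[OF L's] by simp
                then have "inv j \<otimes> m \<in> Lq" unfolding Lq_def using dM dU by blast
                then have "inv j \<otimes> m \<in> J" using J by blast
                then have "j \<otimes> (inv j \<otimes> m) \<in> J" using subgroup.m_closed[OF Js j(1)] by blast
                then show "m \<in> J" using gA2[OF jc mc] by simp
              qed
              then show ?thesis using J by blast
            qed
          qed
          have "x [^] p \<in> Lq" using frat_mono[OF pr Hs Hc Ms Mc HM Lqmax] xp by blast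
          then show "\<phi> (x [^] p) \<in> L'" unfolding Lq_def by blast
        qed
        then have "\<phi> x \<in> Mt" using hier xK pow by simp
        then show False using xMt by simp
      qed
    qed
  qed
qed

end

theorem mainTheorem20:
  fixes G :: "('a, 'm) monoid_scheme" and T :: "'a topology" and p :: nat
  assumes "Factorial_Ring.prime p"
    and "pro_p_group G T p"
    and "\<forall>U. open_subgroup G T U \<longrightarrow>
           (\<exists>(K :: ('b, 'n) monoid_scheme) (TK :: 'b topology) (\<phi> :: 'a \<Rightarrow> 'b).
              pro_p_group K TK p \<and>
              frattini_cover (G\<lparr>carrier := U\<rparr>) (subtopology T U) K TK \<phi> \<and>
              (\<forall>M. maximal_subgroup_of K TK (carrier K) M \<longrightarrow>
                   hierarchical K p M (frattini K TK M)))"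
  shows "strongly_frattini_resistant G T p"
  by (rule PG.main_aux[OF PG_intro[OF assms(2)] assms(1) assms(3)])


end
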